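(* There exists a discrete probability distribution $F$ on $(0,1]$ with $F$-almost surely every sample $X$ satisfying $X\ge 1/4$, such that, with $I_n(F)=(X_1,\ldots,X_n)$ a list of $n$ i.i.d. samples from $F$, $$\liminf_{n\to\infty}\frac{\mathbb{E}[\mathrm{BF}(I_n(F))]}{\mathbb{E}[\mathrm{OPT}(I_n(F))]} > \frac{11}{10}.$$
   Context: Bin packing: items with sizes in $(0,1]$ are packed into unit-capacity bins (total size per bin at most $1$); $\mathrm{OPT}(I)$ is the minimum number of bins for list $I$. The online algorithm Best Fit (BF) processes the items in the given order and packs the current item into the fullest bin (largest current load) into which it fits, opening a new bin if it fits into no existing bin; items are never moved. $\mathrm{BF}(I)$ denotes the number of bins Best Fit uses on list $I$. *)

theory Defs
  imports "HOL-Probability.Probability"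
begin

text \<open>The state is the list of bin loads, in the
order in which the bins were opened.\<close>

definition bf_step :: "real list \<Rightarrow> real \<Rightarrow> real list" where
  "bf_step loads x =
     (let cands = filter (\<lambda>i. loads ! i + x \<le> 1) [0..<length loads] in
      if cands = [] then loads @ [x]
      else (let m = Max ((\<lambda>i. loads ! i) ` set cands);
                j = hd (filter (\<lambda>i. loads ! i = m) cands)
            in loads[j := loads ! j + x]))"

definition bf_loads :: "real list \<Rightarrow> real list" where
  "bf_loads I = fold (\<lambda>x loads. bf_step loads x) I []"

definition BF :: "real list \<Rightarrow> nat" where
  "BF I = length (bf_loads I)"

definition OPT :: "real list \<Rightarrow> nat" where
  "OPT I = (LEAST k. \<exists>f :: nat \<Rightarrow> nat.
              (\<forall>i<length I. f i < k) \<and>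
              (\<forall>b<k. (\<Sum>i\<in>{i. i < length I \<and> f i = b}. I ! i) \<le> 1))"

end

theory Submission
  imports Defs
begin


definition FF :: "real pmf" where
  "FF = map_pmf (\<lambda>b. if b then 3/10 else 1/4) (bernoulli_pmf (2/5))"

lemma set_FF: "set_pmf FF = {1/4, 3/10}"
  by (auto simp: FF_def)

lemma E_FF: "measure_pmf.expectation FF (g::real\<Rightarrow>real) = 3/5 * g (1/4) + 2/5 * g (3/10)"
  by (simp add: FF_def)

lemma fin_rep: "finite (set_pmf (replicate_pmf n FF))"
proof -
  have "set_pmf (replicate_pmf n FF) = {xs. set xs \<subseteq> {1/4, 3/10} \<and> length xs = n}"
    by (auto simp: set_replicate_pmf set_FF)
  then show ?thesis using finite_lists_length_eq[of "{1/4, 3/10::real}" n] by simp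
qed

lemma E_rep_Suc:
  fixes h :: "real list \<Rightarrow> real"
  shows "measure_pmf.expectation (replicate_pmf (Suc n) FF) h =
     3/5 * measure_pmf.expectation (replicate_pmf n FF) (\<lambda>xs. h (1/4 # xs)) +
     2/5 * measure_pmf.expectation (replicate_pmf n FF) (\<lambda>xs. h (3/10 # xs))"
proof -
  have eq: "replicate_pmf (Suc n) FF = FF \<bind> (\<lambda>x. map_pmf (Cons x) (replicate_pmf n FF))"
    by (simp add: map_pmf_def)
  have "measure_pmf.expectation (replicate_pmf (Suc n) FF) h =
        (\<Sum>a\<in>set_pmf FF. pmf FF a *\<^sub>R measure_pmf.expectation (map_pmf (Cons a) (replicate_pmf n FF)) h)"
    unfolding eq
    by (rule pmf_expectation_bind) (auto simp: set_FF fin_rep)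
  also have "\<dots> = measure_pmf.expectation FF (\<lambda>a. measure_pmf.expectation (map_pmf (Cons a) (replicate_pmf n FF)) h)"
    by (rule integral_measure_pmf[symmetric]) (auto simp: set_FF)
  also have "\<dots> = 3/5 * measure_pmf.expectation (replicate_pmf n FF) (\<lambda>xs. h (1/4 # xs)) +
     2/5 * measure_pmf.expectation (replicate_pmf n FF) (\<lambda>xs. h (3/10 # xs))"
    by (simp add: E_FF)
  finally show ?thesis .
qed



definition fitm :: "real multiset \<Rightarrow> real \<Rightarrow> real set" where
  "fitm M x = {l \<in> set_mset M. l + x \<le> 1}"

definition absBF :: "real multiset \<Rightarrow> real \<Rightarrow> real multiset" where
  "absBF M x = (if fitm M x = {} then add_mset x M
                else add_mset (Max (fitm M x) + x) (M - {#Max (fitm M x)#}))"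

lemma finite_fitm[simp]: "finite (fitm M x)"
  by (simp add: fitm_def)

lemma mset_bf_step: "mset (bf_step s x) = absBF (mset s) x"
proof -
  define cands where "cands = filter (\<lambda>i. s ! i + x \<le> 1) [0..<length s]"
  have img: "(\<lambda>i. s ! i) ` set cands = fitm (mset s) x"
    by (auto simp: cands_def fitm_def in_set_conv_nth)
  show ?thesis
  proof (cases "cands = []")
    case True
    then have "fitm (mset s) x = {}" using img by auto
    then show ?thesis using True by (simp add: bf_step_def absBF_def cands_def[symmetric])
  next
    case False
    define m where "m = Max ((\<lambda>i. s ! i) ` set cands)"
    define j where "j = hd (filter (\<lambda>i. s ! i = m) cands)"
    have ne: "fitm (mset s) x \<noteq> {}" using False img by auto
    have "m \<in> (\<lambda>i. s ! i) ` set cands" unfolding m_def using False by (intro Max_in) auto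
    then have "filter (\<lambda>i. s ! i = m) cands \<noteq> []" by (auto simp: filter_empty_conv)
    then have "j \<in> set (filter (\<lambda>i. s ! i = m) cands)" unfolding j_def by (rule hd_in_set)
    then have j: "j < length s" "s ! j = m" by (auto simp: cands_def)
    have "bf_step s x = s[j := s ! j + x]"
      using False by (simp add: bf_step_def cands_def[symmetric] Let_def m_def[symmetric] j_def[symmetric])
    then have "mset (bf_step s x) = add_mset (m + x) (mset s - {#m#})"
      using j by (simp add: mset_update)
    then show ?thesis using ne img by (simp add: absBF_def m_def)
  qed
qed

lemma mset_fold_bf: "mset (fold (\<lambda>x loads. bf_step loads x) I s) = fold (\<lambda>x M. absBF M x) I (mset s)"
  by (induction I arbitrary: s) (simp_all add: mset_bf_step)

lemma BF_abs: "BF I = size (fold (\<lambda>x M. absBF M x) I {#})"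
  by (metis BF_def bf_loads_def mset_fold_bf size_mset mset.simps(1))



definition opn :: "real multiset \<Rightarrow> real multiset" where
  "opn M = filter_mset (\<lambda>l. l \<le> 3/4) M"

lemma fitm_opn: "x \<ge> 1/4 \<Longrightarrow> fitm M x = fitm (opn M) x"
  by (auto simp: fitm_def opn_def)

lemma opn_absBF: assumes "x \<ge> 1/4" shows "opn (absBF M x) = opn (absBF (opn M) x)"
proof (cases "fitm (opn M) x = {}")
  case True
  then show ?thesis using fitm_opn[OF assms, of M] by (simp add: absBF_def opn_def filter_filter_mset)
next
  case False
  define m where "m = Max (fitm (opn M) x)"
  have "m \<in> fitm (opn M) x" using False unfolding m_def by (intro Max_in) auto
  then have m: "m \<in># opn M" "m \<in># M" by (auto simp: fitm_def opn_def)
  have "opn (M - {#m#}) = opn (opn M - {#m#})"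
    unfolding opn_def by (simp add: filter_filter_mset)
  then show ?thesis using False fitm_opn[OF assms, of M] fitm_opn[OF assms, of "opn M"]
    by (simp add: absBF_def m_def[symmetric]) (simp add: opn_def filter_filter_mset)
qed

lemma size_absBF: "size (absBF M x) = size M + (if fitm M x = {} then 1 else 0)"
proof (cases "fitm M x = {}")
  case False
  define m where "m = Max (fitm M x)"
  have "m \<in> fitm M x" using False unfolding m_def by (intro Max_in) auto
  then have "m \<in># M" by (auto simp: fitm_def)
  then have "size M > 0" by (cases M) auto
  with \<open>m \<in># M\<close> show ?thesis using False by (simp add: absBF_def m_def[symmetric] size_Diff_singleton)
qed (simp add: absBF_def)

definition gS :: "real \<Rightarrow> real" where
  "gS s = (if s = 0 then 0 else if s = 1/4 then -4135/5676 else if s = 3/10 then -1775/2838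
    else if s = 1/2 then -125/258 else if s = 11/20 then -1775/5676 else if s = 3/5 then -1775/5676
    else if s = 3/4 then -1625/5676 else if s = 21/20 then -1767/1892 else if s = 27/20 then -1745/2838 else 0)"

definition hh :: "real multiset \<Rightarrow> real" where "hh C = gS (sum_mset C)"

definition SS :: "real multiset set" where
  "SS = {{#}, {#1/4#}, {#3/10#}, {#1/2#}, {#11/20#}, {#3/5#}, {#3/4#}, {#3/10, 3/4#}, {#3/5, 3/4#}}"

definition cc :: real where "cc = 1775/5676"

definition dlt :: "real multiset \<Rightarrow> real \<Rightarrow> real" where
  "dlt C x = (if fitm C x = {} then 1 else 0)"

lemma fitm_add: "fitm (add_mset a M) x = (if a + x \<le> 1 then insert a (fitm M x) else fitm M x)"
  by (auto simp: fitm_def)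
lemma fitm_empty: "fitm {#} x = {}"
  by (auto simp: fitm_def)
lemma drift1:
  assumes "C \<in> SS"
  shows "opn (absBF C (1/4)) \<in> SS \<and> opn (absBF C (3/10)) \<in> SS \<and>
    3/5 * (dlt C (1/4) + hh (opn (absBF C (1/4)))) + 2/5 * (dlt C (3/10) + hh (opn (absBF C (3/10))))
     = hh C + cc"
  using assms unfolding SS_def
  apply (elim insertE emptyE)
  apply (simp_all add: absBF_def fitm_add fitm_empty opn_def dlt_def hh_def gS_def cc_def SS_def)
  done


abbreviation "foldA I M \<equiv> fold (\<lambda>x M. absBF M x) I M"

lemma step_facts:
  assumes "x \<ge> 1/4"
  shows "opn (absBF M x) = opn (absBF (opn M) x)"
    and "real (size (absBF M x)) = real (size M) + dlt (opn M) x"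
  using opn_absBF[OF assms] size_absBF[of M x] fitm_opn[OF assms, of M]
  by (auto simp: dlt_def)

lemma drift_ind:
  "opn M \<in> SS \<Longrightarrow> measure_pmf.expectation (replicate_pmf n FF)
      (\<lambda>I. real (size (foldA I M)) + hh (opn (foldA I M))) = real (size M) + hh (opn M) + cc * n"
proof (induction n arbitrary: M)
  case 0
  then show ?case by simp
next
  case (Suc n)
  define Ma where "Ma = absBF M (1/4)"
  define Mb where "Mb = absBF M (3/10)"
  have d: "opn (absBF (opn M) (1/4)) \<in> SS" "opn (absBF (opn M) (3/10)) \<in> SS"
    "3/5 * (dlt (opn M) (1/4) + hh (opn (absBF (opn M) (1/4)))) + 2/5 * (dlt (opn M) (3/10) + hh (opn (absBF (opn M) (3/10))))
     = hh (opn M) + cc"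
    using drift1[OF Suc.prems] by auto
  have a: "opn Ma = opn (absBF (opn M) (1/4))" "real (size Ma) = real (size M) + dlt (opn M) (1/4)"
    unfolding Ma_def by (rule step_facts; simp)+
  have b: "opn Mb = opn (absBF (opn M) (3/10))" "real (size Mb) = real (size M) + dlt (opn M) (3/10)"
    unfolding Mb_def by (rule step_facts; simp)+
  have "measure_pmf.expectation (replicate_pmf (Suc n) FF)
      (\<lambda>I. real (size (foldA I M)) + hh (opn (foldA I M))) =
      3/5 * measure_pmf.expectation (replicate_pmf n FF) (\<lambda>I. real (size (foldA I Ma)) + hh (opn (foldA I Ma))) +
      2/5 * measure_pmf.expectation (replicate_pmf n FF) (\<lambda>I. real (size (foldA I Mb)) + hh (opn (foldA I Mb)))"
    unfolding E_rep_Suc by (simp add: Ma_def Mb_def)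
  also have "\<dots> = 3/5 * (real (size Ma) + hh (opn Ma) + cc * n) + 2/5 * (real (size Mb) + hh (opn Mb) + cc * n)"
    using Suc.IH[of Ma] Suc.IH[of Mb] a b d by simp
  also have "\<dots> = real (size M) + hh (opn M) + cc * Suc n"
    using a b d(3) by (simp add: algebra_simps)
  finally show ?case .
qed

lemma gS_nonpos: "gS s \<le> 0"
  by (simp add: gS_def)

lemma BF_lower: "measure_pmf.expectation (replicate_pmf n FF) (\<lambda>I. real (BF I)) \<ge> cc * n"
proof -
  have "cc * n = measure_pmf.expectation (replicate_pmf n FF)
      (\<lambda>I. real (size (foldA I {#})) + hh (opn (foldA I {#})))"
    using drift_ind[of "{#}" n] by (simp add: SS_def opn_def hh_def gS_def)
  also have "\<dots> \<le> measure_pmf.expectation (replicate_pmf n FF) (\<lambda>I. real (BF I))"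
    by (rule integral_mono) (auto intro!: integrable_measure_pmf_finite fin_rep simp: BF_abs hh_def gS_nonpos)
  finally show ?thesis .
qed



definition rank :: "(real \<Rightarrow> bool) \<Rightarrow> real list \<Rightarrow> nat \<Rightarrow> nat" where
  "rank P I i = length (filter P (take i I))"

lemma rank_mono: "a \<le> b \<Longrightarrow> rank P I a \<le> rank P I b"
proof -
  assume "a \<le> b"
  then have "take b I = take a I @ drop a (take b I)"
    by (metis append_take_drop_id min.absorb1 take_take)
  then show ?thesis unfolding rank_def by (metis filter_append length_append le_add1)
qed

lemma rank_Suc: "i < length I \<Longrightarrow> P (I ! i) \<Longrightarrow> rank P I (Suc i) = Suc (rank P I i)"
  by (simp add: rank_def take_Suc_conv_app_nth)

lemma rank_strict: "i < j \<Longrightarrow> j \<le> length I \<Longrightarrow> P (I ! i) \<Longrightarrow> rank P I i < rank P I j"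
  using rank_Suc[of i I P] rank_mono[of "Suc i" j P I] by simp

lemma rank_less: "i < length I \<Longrightarrow> P (I ! i) \<Longrightarrow> rank P I i < length (filter P I)"
  using rank_strict[of i "length I" I P] by (simp add: rank_def)

lemma card_bin:
  assumes "c > 0"
  shows "card {i. i < length I \<and> P (I ! i) \<and> rank P I i div c = \<beta>} \<le> c"
proof -
  let ?T = "{i. i < length I \<and> P (I ! i) \<and> rank P I i div c = \<beta>}"
  have inj: "inj_on (rank P I) ?T"
  proof (rule inj_onI)
    fix i j assume "i \<in> ?T" "j \<in> ?T" "rank P I i = rank P I j"
    then show "i = j"
      using rank_strict[of i j I P] rank_strict[of j i I P]
      by (metis (mono_tags, lifting) linorder_neqE_nat mem_Collect_eq nat_less_le order_less_irrefl)
  qed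
  have sub: "rank P I ` ?T \<subseteq> {\<beta>*c..<\<beta>*c + c}"
  proof
    fix r assume "r \<in> rank P I ` ?T"
    then have "r div c = \<beta>" by auto
    moreover have "r = r div c * c + r mod c" by simp
    moreover have "r mod c < c" using assms by simp
    ultimately show "r \<in> {\<beta>*c..<\<beta>*c + c}" by auto
  qed
  have "card ?T = card (rank P I ` ?T)" using card_image[OF inj] by simp
  also have "\<dots> \<le> card {\<beta>*c..<\<beta>*c + c}" by (rule card_mono) (use sub in auto)
  finally show ?thesis by simp
qed



abbreviation "PA \<equiv> (\<lambda>y::real. y = 1/4)"
abbreviation "PB \<equiv> (\<lambda>y::real. y \<noteq> 1/4)"

lemma OPT_le:
  assumes "set I \<subseteq> {1/4, 3/10}"
  shows "OPT I \<le> (length (filter PA I) + 3) div 4 + (length (filter PB I) + 2) div 3"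
    and "I \<noteq> [] \<Longrightarrow> OPT I \<ge> 1"
proof -
  define Ka where "Ka = (length (filter PA I) + 3) div 4"
  define K where "K = Ka + (length (filter PB I) + 2) div 3"
  define f where "f i = (if I ! i = 1/4 then rank PA I i div 4 else Ka + rank PB I i div 3)" for i
  have fa: "rank PA I i div 4 < Ka" if "i < length I" "I ! i = 1/4" for i
  proof -
    have "rank PA I i < length (filter PA I)" using rank_less[of i I PA] that by simp
    then show ?thesis unfolding Ka_def by linarith
  qed
  have P: "(\<forall>i<length I. f i < K) \<and>
              (\<forall>b<K. (\<Sum>i\<in>{i. i < length I \<and> f i = b}. I ! i) \<le> 1)"
  proof (intro conjI allI impI)
    fix i assume i: "i < length I"
    show "f i < K"
    proof (cases "I ! i = 1/4")
      case True
      have "rank PA I i < length (filter PA I)" using rank_less[of i I PA] i True by simp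
      then have "rank PA I i div 4 < Ka" unfolding Ka_def by linarith
      then show ?thesis using True by (simp add: f_def K_def)
    next
      case False
      have "rank PB I i < length (filter PB I)" using rank_less[of i I PB] i False by simp
      then have "rank PB I i div 3 < (length (filter PB I) + 2) div 3" by linarith
      then show ?thesis using False by (simp add: f_def K_def)
    qed
  next
    fix b assume b: "b < K"
    show "(\<Sum>i\<in>{i. i < length I \<and> f i = b}. I ! i) \<le> 1"
    proof (cases "b < Ka")
      case True
      have eq: "{i. i < length I \<and> f i = b} = {i. i < length I \<and> PA (I ! i) \<and> rank PA I i div 4 = b}"
        using True by (auto simp: f_def split: if_splits)
      have "(\<Sum>i\<in>{i. i < length I \<and> f i = b}. I ! i) = (\<Sum>i\<in>{i. i < length I \<and> PA (I ! i) \<and> rank PA I i div 4 = b}. 1/4)"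
        unfolding eq by (rule sum.cong) auto
      also have "\<dots> = card {i. i < length I \<and> PA (I ! i) \<and> rank PA I i div 4 = b} * (1/4)" by simp
      also have "\<dots> \<le> 4 * (1/4)"
        using card_bin[of 4 I PA b] by (intro mult_right_mono) (simp_all add: of_nat_le_iff[symmetric])
      finally show ?thesis by simp
    next
      case False
      have eq: "{i. i < length I \<and> f i = b} = {i. i < length I \<and> PB (I ! i) \<and> rank PB I i div 3 = b - Ka}"
        using False fa by (auto simp: f_def split: if_splits)
      have "(\<Sum>i\<in>{i. i < length I \<and> f i = b}. I ! i) = (\<Sum>i\<in>{i. i < length I \<and> PB (I ! i) \<and> rank PB I i div 3 = b - Ka}. 3/10)"
        unfolding eq
      proof (rule sum.cong)
        fix i assume "i \<in> {i. i < length I \<and> PB (I ! i) \<and> rank PB I i div 3 = b - Ka}"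
        then have "I ! i \<in> set I" "I ! i \<noteq> 1/4" by auto
        then show "I ! i = 3/10" using assms by auto
      qed simp
      also have "\<dots> = card {i. i < length I \<and> PB (I ! i) \<and> rank PB I i div 3 = b - Ka} * (3/10)" by simp
      also have "\<dots> \<le> 3 * (3/10)"
        using card_bin[of 3 I PB "b - Ka"] by (intro mult_right_mono) (simp_all add: of_nat_le_iff[symmetric])
      finally show ?thesis by simp
    qed
  qed
  have ex: "\<exists>f :: nat \<Rightarrow> nat. (\<forall>i<length I. f i < K) \<and>
              (\<forall>b<K. (\<Sum>i\<in>{i. i < length I \<and> f i = b}. I ! i) \<le> 1)"
    using P by blast
  show "OPT I \<le> (length (filter PA I) + 3) div 4 + (length (filter PB I) + 2) div 3"
    unfolding OPT_def K_def[symmetric] Ka_def[symmetric] by (rule Least_le) (rule ex)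
  assume ne: "I \<noteq> []"
  have "\<exists>f :: nat \<Rightarrow> nat. (\<forall>i<length I. f i < OPT I) \<and>
              (\<forall>b<OPT I. (\<Sum>i\<in>{i. i < length I \<and> f i = b}. I ! i) \<le> 1)"
    unfolding OPT_def by (rule LeastI_ex) (use ex in blast)
  then obtain g :: "nat \<Rightarrow> nat" where "\<forall>i<length I. g i < OPT I" by blast
  then have "g 0 < OPT I" using ne by auto
  then show "OPT I \<ge> 1" by simp
qed



definition wsum :: "real list \<Rightarrow> real" where
  "wsum I = sum_list (map (\<lambda>y. if y = 1/4 then 1/4 else 1/3) I)"

lemma wsum_eq: "wsum I = real (length (filter PA I)) / 4 + real (length (filter PB I)) / 3"
  by (induction I) (auto simp: wsum_def)

lemma rdiv: "k > 0 \<Longrightarrow> real (m div k) \<le> real m / real k"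
proof -
  assume k: "k > 0"
  have "m div k * k \<le> m" by (simp add: div_times_less_eq_dividend)
  then have "real (m div k) * real k \<le> real m" by (metis of_nat_mult of_nat_le_iff)
  then show ?thesis using k by (simp add: pos_le_divide_eq)
qed

lemma OPT_wsum: "set I \<subseteq> {1/4, 3/10} \<Longrightarrow> real (OPT I) \<le> wsum I + 2"
proof -
  assume a: "set I \<subseteq> {1/4, 3/10}"
  let ?na = "length (filter PA I)" and ?nb = "length (filter PB I)"
  have "real (OPT I) \<le> real ((?na + 3) div 4 + (?nb + 2) div 3)"
    using OPT_le(1)[OF a] by linarith
  also have "\<dots> = real ((?na + 3) div 4) + real ((?nb + 2) div 3)" by simp
  also have "\<dots> \<le> real (?na + 3) / 4 + real (?nb + 2) / 3"
  proof (rule add_mono)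
    show "real ((?na + 3) div 4) \<le> real (?na + 3) / 4"
      using rdiv[of 4 "?na + 3"] by (simp only: of_nat_numeral zero_less_numeral simp_thms)
    show "real ((?nb + 2) div 3) \<le> real (?nb + 2) / 3"
      using rdiv[of 3 "?nb + 2"] by (simp only: of_nat_numeral zero_less_numeral simp_thms)
  qed
  also have "\<dots> \<le> wsum I + 2" by (simp add: wsum_eq field_simps)
  finally show ?thesis .
qed

lemma E_add_const: "measure_pmf.expectation (replicate_pmf n FF) (\<lambda>xs. (c::real) + (g::real list \<Rightarrow> real) xs) =
   c + measure_pmf.expectation (replicate_pmf n FF) g"
  by (subst Bochner_Integration.integral_add) (auto intro!: integrable_measure_pmf_finite fin_rep simp: measure_pmf.prob_space)

lemma E_wsum: "measure_pmf.expectation (replicate_pmf n FF) wsum = 17/60 * n"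
proof (induction n)
  case 0
  then show ?case by (simp add: wsum_def)
next
  case (Suc n)
  have "measure_pmf.expectation (replicate_pmf (Suc n) FF) wsum =
     3/5 * measure_pmf.expectation (replicate_pmf n FF) (\<lambda>xs. 1/4 + wsum xs) +
     2/5 * measure_pmf.expectation (replicate_pmf n FF) (\<lambda>xs. 1/3 + wsum xs)"
    unfolding E_rep_Suc by (simp add: wsum_def)
  also have "\<dots> = 17/60 * Suc n" unfolding E_add_const Suc.IH by (simp add: algebra_simps)
  finally show ?case .
qed

lemma OPT_upper: "measure_pmf.expectation (replicate_pmf n FF) (\<lambda>I. real (OPT I)) \<le> 17/60 * n + 2"
proof -
  have "measure_pmf.expectation (replicate_pmf n FF) (\<lambda>I. real (OPT I))
     \<le> measure_pmf.expectation (replicate_pmf n FF) (\<lambda>I. 2 + wsum I)"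
    by (rule integral_mono_AE) (auto intro!: integrable_measure_pmf_finite fin_rep OPT_wsum
        simp: AE_measure_pmf_iff set_replicate_pmf set_FF add.commute)
  also have "\<dots> = 17/60 * n + 2" unfolding E_add_const E_wsum by simp
  finally show ?thesis .
qed

lemma OPT_lower: "n \<ge> 1 \<Longrightarrow> measure_pmf.expectation (replicate_pmf n FF) (\<lambda>I. real (OPT I)) \<ge> 1"
proof -
  assume n: "n \<ge> 1"
  have "measure_pmf.expectation (replicate_pmf n FF) (\<lambda>I. 1::real)
     \<le> measure_pmf.expectation (replicate_pmf n FF) (\<lambda>I. real (OPT I))"
  proof (rule integral_mono_AE)
    show "AE I in measure_pmf (replicate_pmf n FF). 1 \<le> real (OPT I)"
      unfolding AE_measure_pmf_iff
    proof
      fix I assume "I \<in> set_pmf (replicate_pmf n FF)"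
      then have "set I \<subseteq> {1/4, 3/10}" "length I = n" by (auto simp: set_replicate_pmf set_FF)
      then show "1 \<le> real (OPT I)" using OPT_le(2)[of I] n by (cases I) auto
    qed
  qed (auto intro!: integrable_measure_pmf_finite fin_rep)
  then show ?thesis by simp
qed

theorem lemma15:
  shows "\<exists>F :: real pmf.
           set_pmf F \<subseteq> {0<..1} \<and>
           (AE x in measure_pmf F. x \<ge> 1/4) \<and>
           liminf (\<lambda>n. ereal (measure_pmf.expectation (replicate_pmf n F) (\<lambda>I. real (BF I))
                             / measure_pmf.expectation (replicate_pmf n F) (\<lambda>I. real (OPT I))))
             > ereal (11/10)"
proof (intro exI conjI)
  show "set_pmf FF \<subseteq> {0<..1}" by (simp add: set_FF)
  show "AE x in measure_pmf FF. x \<ge> 1/4" by (simp add: AE_measure_pmf_iff set_FF)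
  have ev: "eventually (\<lambda>n. ereal (1101/1000) \<le> ereal (measure_pmf.expectation (replicate_pmf n FF) (\<lambda>I. real (BF I))
                             / measure_pmf.expectation (replicate_pmf n FF) (\<lambda>I. real (OPT I)))) sequentially"
    unfolding eventually_sequentially
  proof (intro exI allI impI)
    fix n :: nat assume n: "n \<ge> 3000"
    define B where "B = measure_pmf.expectation (replicate_pmf n FF) (\<lambda>I. real (BF I))"
    define Oo where "Oo = measure_pmf.expectation (replicate_pmf n FF) (\<lambda>I. real (OPT I))"
    have B: "B \<ge> cc * n" unfolding B_def by (rule BF_lower)
    have O1: "Oo \<le> 17/60 * n + 2" unfolding Oo_def by (rule OPT_upper)
    have O2: "Oo \<ge> 1" unfolding Oo_def by (rule OPT_lower) (use n in simp)
    have nr: "real n \<ge> 3000" using n by simp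
    have "1101/1000 * Oo \<le> 1101/1000 * (17/60 * n + 2)" using O1 by simp
    also have "\<dots> \<le> cc * n" using nr by (simp add: cc_def)
    also have "\<dots> \<le> B" by (rule B)
    finally have "1101/1000 * Oo \<le> B" .
    then have "1101/1000 \<le> B / Oo" using O2 by (simp add: field_simps)
    then show "ereal (1101/1000) \<le> ereal (B / Oo)" by simp
  qed
  have "ereal (1101/1000) \<le> liminf (\<lambda>n. ereal (measure_pmf.expectation (replicate_pmf n FF) (\<lambda>I. real (BF I))
                             / measure_pmf.expectation (replicate_pmf n FF) (\<lambda>I. real (OPT I))))"
    by (rule Liminf_bounded[OF ev])
  then show "liminf (\<lambda>n. ereal (measure_pmf.expectation (replicate_pmf n FF) (\<lambda>I. real (BF I))
                             / measure_pmf.expectation (replicate_pmf n FF) (\<lambda>I. real (OPT I))))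
             > ereal (11/10)"
    by (rule less_le_trans[rotated]) simp
qed

end
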